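(* Let $f>0$ be an even $C^2$ function on $\mathbb{R}$ with $f'(v)\geq0$ for $v\geq0$ and $f'(v)^2\leq C_0 f''(v)f(v)$ for all $v$. Let $t\geq0$, $R>0$, and let $\phi$ be smooth on a neighbourhood of $\{t\}\times\{|x|\leq R\}$. Then, with a constant depending only on $C_0$, \[ \int_{|x|\leq R}f''(t-r)\phi^2\,dx\lesssim\int_{|x|\leq R}\Big[f(t+r)\big(L(r\phi)\big)^2+f(t-r)\big(\underline L(r\phi)\big)^2\Big]\frac{dx}{r^2}+|f'(t-R)|\int_{|x|=R}\phi^2\,R^2\,dS(\omega). \]
   Context: $r=|x|$, $\omega=x/r$, $\partial_r=\omega^i\partial_i$, $L=\partial_t+\partial_r$, $\underline L=\partial_t-\partial_r$; $dS(\omega)$ is the standard measure on the unit sphere. *)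

theory Defs
  imports "HOL-Analysis.Analysis"
begin

text \<open>Points of spacetime are pairs (s, y) with s the time and y in R^3.\<close>

fun iter_dderiv :: "'a::real_normed_vector list \<Rightarrow> ('a \<Rightarrow> real) \<Rightarrow> ('a \<Rightarrow> real)" where
  "iter_dderiv [] g = g"
| "iter_dderiv (v # vs) g = (\<lambda>p. frechet_derivative (iter_dderiv vs g) (at p) v)"

definition smooth_on :: "'a::real_normed_vector set \<Rightarrow> ('a \<Rightarrow> real) \<Rightarrow> bool" where
  "smooth_on U g \<longleftrightarrow> (\<forall>vs. iter_dderiv vs g differentiable_on U)"

text \<open>Null-frame derivatives L = d_t + d_r and Lbar = d_t - d_r, with d_r = omega . grad.\<close>
definition Lop :: "(real \<times> (real^3) \<Rightarrow> real) \<Rightarrow> real \<times> (real^3) \<Rightarrow> real" where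
  "Lop g p = frechet_derivative g (at p) (1, snd p /\<^sub>R norm (snd p))"

definition Lbar :: "(real \<times> (real^3) \<Rightarrow> real) \<Rightarrow> real \<times> (real^3) \<Rightarrow> real" where
  "Lbar g p = frechet_derivative g (at p) (1, - (snd p /\<^sub>R norm (snd p)))"

definition sph :: "real \<Rightarrow> real \<Rightarrow> real^3" where
  "sph \<theta> \<phi> = vector [sin \<theta> * cos \<phi>, sin \<theta> * sin \<phi>, cos \<theta>]"

definition sphere_integral :: "(real^3 \<Rightarrow> real) \<Rightarrow> real" where
  "sphere_integral g = (LBINT \<theta>=0..pi. (LBINT \<phi>=0..2*pi. g (sph \<theta> \<phi>) * sin \<theta>))"

end

theory Submission
  imports Defs
begin


lemma sph_nth [simp]:
  "sph a b $ 1 = sin a * cos b" "sph a b $ 2 = sin a * sin b" "sph a b $ 3 = cos a"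
  by (simp_all add: sph_def)

lemma inner3: "(x::real^3) \<bullet> y = x$1*y$1 + x$2*y$2 + x$3*y$3"
  by (simp add: inner_vec_def sum_3)

lemma norm3: "norm (x::real^3) = sqrt (x$1^2 + x$2^2 + x$3^2)"
  by (simp add: norm_eq_sqrt_inner inner3 power2_eq_square)

lemma sph_inner_self: "sph a b \<bullet> sph a b = 1"
proof -
  have "sph a b \<bullet> sph a b = (sin a)^2 * ((cos b)^2 + (sin b)^2) + (cos a)^2"
    unfolding inner3 sph_nth by algebra
  also have "\<dots> = 1" by simp
  finally show ?thesis .
qed

lemma norm_sph [simp]: "norm (sph a b) = 1"
  by (simp add: norm_eq_sqrt_inner sph_inner_self)

definition P3 :: "real^3 \<Rightarrow> real^3" where "P3 v = v$3 *\<^sub>R sph (v$1) (v$2)"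

lemma norm_P3: "v$3 \<ge> 0 \<Longrightarrow> norm (P3 v) = v$3"
  by (simp add: P3_def)

definition boxa :: "real^3" where "boxa = vector [0,0,0]"
definition boxb :: "real \<Rightarrow> real^3" where "boxb R = vector [pi,2*pi,R]"

lemma mem_box3: "v \<in> box boxa (boxb R) \<longleftrightarrow> 0 < v$1 \<and> v$1 < pi \<and> 0 < v$2 \<and> v$2 < 2*pi \<and> 0 < v$3 \<and> v$3 < R"
  by (auto simp: mem_box_cart forall_3 boxa_def boxb_def)

lemma mem_cbox3: "v \<in> cbox boxa (boxb R) \<longleftrightarrow> 0 \<le> v$1 \<and> v$1 \<le> pi \<and> 0 \<le> v$2 \<and> v$2 \<le> 2*pi \<and> 0 \<le> v$3 \<and> v$3 \<le> R"
  by (auto simp: mem_box_cart forall_3 boxa_def boxb_def)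

lemma vec3_eqI: "(v::real^3)$1 = w$1 \<Longrightarrow> v$2 = w$2 \<Longrightarrow> v$3 = w$3 \<Longrightarrow> v = w"
  by (simp add: vec_eq_iff forall_3)

lemma P3_inj: "inj_on P3 (box boxa (boxb R))"
proof (rule inj_onI)
  fix v w assume v: "v \<in> box boxa (boxb R)" and w: "w \<in> box boxa (boxb R)" and eq: "P3 v = P3 w"
  from v w have vv: "0 < v$1" "v$1 < pi" "0 < v$2" "v$2 < 2*pi" "0 < v$3"
    and ww: "0 < w$1" "w$1 < pi" "0 < w$2" "w$2 < 2*pi" "0 < w$3"
    by (auto simp: mem_box3)
  have r: "v$3 = w$3" using norm_P3[of v] norm_P3[of w] eq vv ww by simp
  have s: "sph (v$1) (v$2) = sph (w$1) (w$2)"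
    using eq r vv by (simp add: P3_def)
  have c1: "cos (v$1) = cos (w$1)" using arg_cong[OF s, of "\<lambda>x. x$3"] by simp
  have t: "v$1 = w$1" using cos_inj_pi[OF _ _ _ _ c1] vv ww by simp
  have sinpos: "sin (v$1) > 0" using vv by (simp add: sin_gt_zero)
  have c2: "cos (v$2) = cos (w$2)" using arg_cong[OF s, of "\<lambda>x. x$1"] t sinpos by simp
  have s2: "sin (v$2) = sin (w$2)" using arg_cong[OF s, of "\<lambda>x. x$2"] t sinpos by simp
  obtain n::int where n: "v$2 = w$2 + 2*pi*n" using sin_cos_eq_iff[of "v$2" "w$2"] c2 s2 by auto
  have "n = 0"
  proof (rule ccontr)
    assume "n \<noteq> 0"
    then have "\<bar>real_of_int n\<bar> \<ge> 1" by linarith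
    then have "\<bar>2*pi*n\<bar> \<ge> 2*pi" using pi_gt_zero by (simp add: abs_mult)
    then show False using n vv ww by linarith
  qed
  then have "v$2 = w$2" using n by simp
  then show "v = w" using t r by (intro vec3_eqI)
qed


lemma sin_arccos_ratio:
  assumes "r > 0" "\<rho> > 0" "\<rho>^2 + z^2 = r^2"
  shows "sin (arccos (z/r)) = \<rho>/r" "cos (arccos (z/r)) = z/r" "0 < arccos (z/r)" "arccos (z/r) < pi"
proof -
  have zr: "z^2 < r^2" using assms by (smt (verit) power2_less_0 zero_less_power2)
  have "\<bar>z\<bar> < r" using zr assms(1) by (metis abs_le_square_iff abs_of_pos not_le)
  then have b: "-1 < z/r" "z/r < 1" using assms(1) by (auto simp: field_simps abs_less_iff)
  have "1 - (z/r)^2 = (\<rho>/r)^2" using assms by (simp add: field_simps)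
  moreover have "\<bar>z/r\<bar> \<le> 1" using b by auto
  ultimately show "sin (arccos (z/r)) = \<rho>/r" using assms by (simp add: sin_arccos_abs)
  show "cos (arccos (z/r)) = z/r" using b by (simp add: cos_arccos)
  show "0 < arccos (z/r)" "arccos (z/r) < pi" using arccos_lt_bounded[OF b] by auto
qed

lemma P3_surj:
  assumes x: "x \<in> ball 0 R" and x2: "x$2 \<noteq> 0"
  shows "x \<in> P3 ` box boxa (boxb R)"
proof -
  define r where "r = norm x"
  define \<rho> where "\<rho> = sqrt ((x$1)^2 + (x$2)^2)"
  have \<rho>pos: "\<rho> > 0" using x2 by (simp add: \<rho>_def add_nonneg_pos)
  have \<rho>sq: "\<rho>^2 = (x$1)^2 + (x$2)^2" by (simp add: \<rho>_def)
  have rsq: "r^2 = (x$1)^2 + (x$2)^2 + (x$3)^2" by (simp add: r_def norm3)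
  have rpos: "r > 0" using \<rho>pos rsq \<rho>sq r_def
    by (metis norm_ge_zero order_le_less add_pos_nonneg zero_less_power2 power_zero_numeral zero_le_power2 \<rho>_def x2 less_irrefl)
  have rR: "r < R" using x by (simp add: r_def)
  define \<theta> where "\<theta> = arccos (x$3/r)"
  have th: "sin \<theta> = \<rho>/r" "cos \<theta> = x$3/r" "0 < \<theta>" "\<theta> < pi"
    using sin_arccos_ratio[OF rpos \<rho>pos, of "x$3"] rsq \<rho>sq by (auto simp: \<theta>_def)
  have x1sq: "(x$2)^2 + (x$1)^2 = \<rho>^2" using \<rho>sq by simp
  have absx2: "\<bar>x$2\<bar> > 0" using x2 by simp
  obtain \<phi> where ph: "sin \<phi> = x$2/\<rho>" "cos \<phi> = x$1/\<rho>" "0 < \<phi>" "\<phi> < 2*pi"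
  proof (cases "x$2 > 0")
    case True
    note a = sin_arccos_ratio[OF \<rho>pos True x1sq]
    show ?thesis by (rule that[of "arccos (x$1/\<rho>)"]) (use a in auto)
  next
    case False
    then have neg: "- x$2 > 0" using x2 by simp
    have x1sq': "(- x$2)^2 + (x$1)^2 = \<rho>^2" using x1sq by simp
    note a = sin_arccos_ratio[OF \<rho>pos neg x1sq']
    show ?thesis
      by (rule that[of "2*pi - arccos (x$1/\<rho>)"]) (use a in \<open>auto simp: sin_diff cos_diff\<close>)
  qed
  define v :: "real^3" where "v = vector [\<theta>, \<phi>, r]"
  have "v \<in> box boxa (boxb R)" using th ph rpos rR by (simp add: mem_box3 v_def)
  moreover have "P3 v = x"
  proof -
    have e1: "r * sin \<theta> = \<rho>" "r * cos \<theta> = x$3" "\<rho> * sin \<phi> = x$2" "\<rho> * cos \<phi> = x$1"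
      using th ph rpos \<rho>pos by (auto simp: field_simps)
    have "r * (sin \<theta> * cos \<phi>) = x$1" "r * (sin \<theta> * sin \<phi>) = x$2"
      using e1 by (metis mult.assoc)+
    then show ?thesis using e1 by (intro vec3_eqI) (simp_all add: P3_def v_def)
  qed
  ultimately show ?thesis by blast
qed


definition P3' :: "real^3 \<Rightarrow> real^3 \<Rightarrow> real^3" where
  "P3' v h = vector [
     v$3 * cos (v$1) * cos (v$2) * h$1 - v$3 * sin (v$1) * sin (v$2) * h$2 + sin (v$1) * cos (v$2) * h$3,
     v$3 * cos (v$1) * sin (v$2) * h$1 + v$3 * sin (v$1) * cos (v$2) * h$2 + sin (v$1) * sin (v$2) * h$3,
     - v$3 * sin (v$1) * h$1 + cos (v$1) * h$3]"

lemma has_derivative_nth3: "((\<lambda>x::real^3. x$i) has_derivative (\<lambda>h. h$i)) F"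
  by (rule bounded_linear_imp_has_derivative) (rule bounded_linear_vec_nth)

lemma P3_deriv: "(P3 has_derivative P3' v) (at v within S)"
proof -
  have "((\<lambda>x. P3 x $ i) has_derivative (\<lambda>h. P3' v h $ i)) (at v within S)" for i
  proof -
    consider "i = 1" | "i = 2" | "i = 3" using exhaust_3 by blast
    then show ?thesis
    proof cases
      case 1
      show ?thesis unfolding 1 P3_def P3'_def
        by (auto intro!: derivative_eq_intros has_derivative_nth3 simp: algebra_simps)
    next
      case 2
      show ?thesis unfolding 2 P3_def P3'_def
        by (auto intro!: derivative_eq_intros has_derivative_nth3 simp: algebra_simps)
    next
      case 3
      show ?thesis unfolding 3 P3_def P3'_def
        by (auto intro!: derivative_eq_intros has_derivative_nth3 simp: algebra_simps)
    qed
  qed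
  then show ?thesis
    by (subst has_derivative_componentwise_within) (auto simp: Basis_vec_def inner_axis)
qed

lemma det_P3': "det (matrix (P3' v)) = (v$3)^2 * sin (v$1)"
proof -
  have m: "matrix (P3' v) $ i $ j = P3' v (axis j 1) $ i" for i j
    by (simp add: matrix_def)
  have s1: "(sin (v$1))^2 + (cos (v$1))^2 = 1" "(sin (v$2))^2 + (cos (v$2))^2 = 1" by simp_all
  show ?thesis
    unfolding det_3 m P3'_def by (simp add: axis_def) (use s1 in algebra)
qed


lemma abs_int_vec1:
  "((\<lambda>x. vec (G x) :: real^1) absolutely_integrable_on S) \<longleftrightarrow> G absolutely_integrable_on S"
  by (subst absolutely_integrable_componentwise_iff) (simp add: Basis_vec_def inner_axis)

lemma negligible_x2: "negligible {x::real^3. x$2 = 0}"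
proof -
  have "{x::real^3. x$2 = 0} = {x. axis 2 (1::real) \<bullet> x = 0}" by (simp add: inner_axis')
  moreover have "negligible {x::real^3. axis 2 (1::real) \<bullet> x = 0}"
    by (rule negligible_hyperplane) (simp add: axis_eq_0_iff)
  ultimately show ?thesis by simp
qed

lemma P3_image_sub: "P3 ` box boxa (boxb R) \<subseteq> cball 0 R"
  by (auto simp: mem_box3 norm_P3)

lemma cball_minus_image: "cball 0 R - P3 ` box boxa (boxb R) \<subseteq> sphere 0 R \<union> {x::real^3. x$2 = 0}"
  using P3_surj[of _ R] by (force simp: dist_norm)

lemma polar_integral:
  fixes F :: "real^3 \<Rightarrow> real"
  assumes G: "(\<lambda>v. (v$3)^2 * sin (v$1) * F (P3 v)) absolutely_integrable_on box boxa (boxb R)"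
  shows "F absolutely_integrable_on cball 0 R"
    "integral (cball 0 R) F = integral (box boxa (boxb R)) (\<lambda>v. (v$3)^2 * sin (v$1) * F (P3 v))"
proof -
  let ?S = "box boxa (boxb R)"
  let ?G = "\<lambda>v. (v$3)^2 * sin (v$1) * F (P3 v)"
  let ?f = "\<lambda>x. vec (F x) :: real^1"
  have eqS: "\<bar>det (matrix (P3' v))\<bar> *\<^sub>R ?f (P3 v) = vec (?G v)" if "v \<in> ?S" for v
  proof -
    have "sin (v$1) > 0" using that by (simp add: mem_box3 sin_gt_zero)
    then show ?thesis by (simp add: det_P3' abs_mult vec_eq_iff)
  qed
  have ai1: "(\<lambda>v. vec (?G v) :: real^1) absolutely_integrable_on ?S"
    using G by (simp add: abs_int_vec1)
  have ai2: "(\<lambda>v. \<bar>det (matrix (P3' v))\<bar> *\<^sub>R ?f (P3 v)) absolutely_integrable_on ?S"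
    by (rule absolutely_integrable_spike[OF ai1 negligible_empty]) (use eqS in auto)
  have int2: "integral ?S (\<lambda>v. \<bar>det (matrix (P3' v))\<bar> *\<^sub>R ?f (P3 v)) = integral ?S (\<lambda>v. vec (?G v) :: real^1)"
    by (rule integral_cong) (use eqS in auto)
  have cov: "?f absolutely_integrable_on P3 ` ?S \<and> integral (P3 ` ?S) ?f = integral ?S (\<lambda>v. vec (?G v) :: real^1)"
    using has_absolute_integral_change_of_variables[of ?S P3 "\<lambda>v. P3' v" ?f "integral ?S (\<lambda>v. vec (?G v) :: real^1)"]
      ai2 int2 P3_deriv P3_inj by auto
  have aiF: "F absolutely_integrable_on P3 ` ?S" using cov by (simp add: abs_int_vec1)
  have negN: "negligible (sphere 0 R \<union> {x::real^3. x$2 = 0})"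
    using negligible_Un[OF negligible_sphere negligible_x2] by blast
  have n1: "negligible {x \<in> cball 0 R - P3 ` ?S. F x \<noteq> 0}"
    by (rule negligible_subset[OF negN]) (use cball_minus_image in blast)
  have n2: "negligible {x \<in> P3 ` ?S - cball 0 R. F x \<noteq> 0}"
  proof -
    have "{x \<in> P3 ` ?S - cball 0 R. F x \<noteq> 0} = {}" using P3_image_sub[of R] by blast
    then show ?thesis by (simp only: negligible_empty)
  qed
  show "F absolutely_integrable_on cball 0 R"
    using absolutely_integrable_spike_set_eq[OF n1 n2] aiF by blast
  have "integral (P3 ` ?S) F = integral ?S ?G"
  proof -
    have i1: "?f integrable_on P3 ` ?S" using cov set_lebesgue_integral_eq_integral(1) by blast
    have i2: "(\<lambda>v. vec (?G v) :: real^1) integrable_on ?S" using ai1 set_lebesgue_integral_eq_integral(1) by blast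
    have "integral (P3 ` ?S) F = integral (P3 ` ?S) ?f $ 1"
      using integral_component_eq_cart[OF i1, of 1] by simp
    also have "\<dots> = integral ?S (\<lambda>v. vec (?G v) :: real^1) $ 1" using cov by simp
    also have "\<dots> = integral ?S ?G" using integral_component_eq_cart[OF i2, of 1] by simp
    finally show ?thesis .
  qed
  moreover have "integral (cball 0 R) F = integral (P3 ` ?S) F"
    using integral_spike_set[OF n1 n2] .
  ultimately show "integral (cball 0 R) F = integral ?S ?G" by simp
qed



lemma exists_3: "(\<exists>i::3. P i) \<longleftrightarrow> P 1 \<or> P 2 \<or> P 3" by (metis exhaust_3)
lemma prod_3: "prod f (UNIV::3 set) = f 1 * f 2 * f 3"
  unfolding UNIV_3 by (simp add: ac_simps)

definition g3 :: "real \<times> real \<times> real \<Rightarrow> real^3" where "g3 p = vector [fst p, fst (snd p), snd (snd p)]"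
definition h3 :: "real^3 \<Rightarrow> real \<times> real \<times> real" where "h3 x = (x$1, x$2, x$3)"

lemma g3h3: "g3 (h3 x) = x" by (simp add: g3_def h3_def vec3_eqI)
lemma h3g3: "h3 (g3 p) = p" by (simp add: g3_def h3_def)

lemma mem_cbox_g3: "x \<in> cbox (g3 u) (g3 v) \<longleftrightarrow> h3 x \<in> cbox u v"
proof -
  obtain a1 a2 a3 where u: "u = (a1,a2,a3)" by (cases u) auto
  obtain b1 b2 b3 where v: "v = (b1,b2,b3)" by (cases v) auto
  show ?thesis unfolding u v mem_box_cart forall_3 cbox_Pair_eq g3_def h3_def
    by (simp add: mem_Times_iff)
qed

lemma g3_cbox: "g3 ` cbox u v = cbox (g3 u) (g3 v)"
proof (intro subset_antisym subsetI)
  fix x assume "x \<in> g3 ` cbox u v"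
  then obtain p where "p \<in> cbox u v" "x = g3 p" by blast
  then show "x \<in> cbox (g3 u) (g3 v)" by (simp add: mem_cbox_g3 h3g3)
next
  fix x assume "x \<in> cbox (g3 u) (g3 v)"
  then have "h3 x \<in> cbox u v" by (simp add: mem_cbox_g3)
  then show "x \<in> g3 ` cbox u v" by (metis g3h3 image_eqI)
qed

lemma h3_cbox: "h3 ` cbox u v = cbox (h3 u) (h3 v)"
proof -
  have "g3 (h3 u) = u" "g3 (h3 v) = v" by (simp_all add: g3h3)
  have m: "p \<in> cbox (h3 u) (h3 v) \<longleftrightarrow> g3 p \<in> cbox u v" for p
    using mem_cbox_g3[of "g3 p" "h3 u" "h3 v"] by (simp add: g3h3 h3g3)
  show ?thesis
  proof (intro subset_antisym subsetI)
    fix p assume "p \<in> h3 ` cbox u v"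
    then show "p \<in> cbox (h3 u) (h3 v)" using m g3h3 by auto
  next
    fix p assume "p \<in> cbox (h3 u) (h3 v)"
    then have "g3 p \<in> cbox u v" using m by simp
    then show "p \<in> h3 ` cbox u v" by (metis h3g3 image_eqI)
  qed
qed


lemma content_g3: "measure lborel (g3 ` cbox u v) = 1 * measure lborel (cbox u v)"
proof -
  obtain a1 a2 a3 where u: "u = (a1,a2,a3)" by (cases u) auto
  obtain b1 b2 b3 where v: "v = (b1,b2,b3)" by (cases v) auto
  have c1: "measure lborel (cbox u v) = measure lborel {a1..b1} * (measure lborel {a2..b2} * measure lborel {a3..b3})"
    by (simp add: u v content_Pair)
  show ?thesis
  proof (cases "a1 \<le> b1 \<and> a2 \<le> b2 \<and> a3 \<le> b3")
    case True
    then have ne: "cbox (g3 u) (g3 v) \<noteq> {}"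
      unfolding interval_eq_empty_cart exists_3 u v g3_def by (simp add: not_less)
    have "measure lborel (cbox (g3 u) (g3 v)) = (b1 - a1) * (b2 - a2) * (b3 - a3)"
      unfolding content_cbox_if_cart using ne by (simp add: prod_3 u v g3_def)
    then show ?thesis using True c1 by (simp add: g3_cbox)
  next
    case False
    then have e: "cbox (g3 u) (g3 v) = {}"
      unfolding interval_eq_empty_cart exists_3 u v g3_def by (simp add: not_le)
    have "measure lborel (cbox u v) = 0" using False c1 by auto
    then show ?thesis using e by (simp add: g3_cbox)
  qed
qed

lemma linear_g3: "linear g3"
  by (rule linearI) (auto intro!: vec3_eqI simp: g3_def)

lemma continuous_g3: "continuous (at x) g3"
  using linear_g3 by (intro linear_continuous_at) (simp add: linear_conv_bounded_linear)


lemma fubini3: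
  fixes G :: "real^3 \<Rightarrow> real"
  assumes cont: "continuous_on (cbox u v) G"
  shows "integral (cbox u v) G = integral {u$1..v$1} (\<lambda>a. integral {u$2..v$2} (\<lambda>b. integral {u$3..v$3} (\<lambda>c. G (vector [a,b,c]))))"
proof -
  let ?I = "integral (cbox u v) G"
  have i: "(G has_integral ?I) (cbox u v)" using integrable_continuous[OF cont] by blast
  have tw: "((\<lambda>p. G (g3 p)) has_integral (1/1) *\<^sub>R ?I) (h3 ` cbox u v)"
    by (rule has_integral_twiddle[where g=g3 and h=h3, OF _ h3g3 g3h3 continuous_g3 _ _ content_g3 i])
       (auto simp: g3_cbox h3_cbox simp del: split_paired_Ex)
  have hb: "h3 ` cbox u v = cbox (u$1, u$2, u$3) (v$1, v$2, v$3)" by (simp only: h3_cbox) (simp add: h3_def)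
  have gimg: "g3 ` cbox (u$1, u$2, u$3) (v$1, v$2, v$3) = cbox u v"
  proof -
    have "(u$1, u$2, u$3) = h3 u" "(v$1, v$2, v$3) = h3 v" by (simp_all add: h3_def)
    then show ?thesis using g3_cbox[of "h3 u" "h3 v"] by (simp add: g3h3)
  qed
  have contf: "continuous_on (cbox (u$1, u$2, u$3) (v$1, v$2, v$3)) (\<lambda>p. G (g3 p))"
    by (rule continuous_on_compose2[OF cont]) (auto intro: continuous_at_imp_continuous_on continuous_g3 simp: gimg)
  have "?I = integral (cbox (u$1, u$2, u$3) (v$1, v$2, v$3)) (\<lambda>p. G (g3 p))"
    using tw hb by (simp add: integral_unique)
  also have "\<dots> = integral (cbox (u$1) (v$1)) (\<lambda>a. integral (cbox (u$2, u$3) (v$2, v$3)) (\<lambda>y. G (g3 (a, y))))"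
    by (rule integral_prod_continuous[OF contf])
  also have "\<dots> = integral (cbox (u$1) (v$1)) (\<lambda>a. integral (cbox (u$2) (v$2)) (\<lambda>b. integral (cbox (u$3) (v$3)) (\<lambda>c. G (g3 (a, b, c)))))"
  proof (rule integral_cong)
    fix a assume a: "a \<in> cbox (u$1) (v$1)"
    have "continuous_on (cbox (u$2, u$3) (v$2, v$3)) (\<lambda>y. G (g3 (a, y)))"
      by (rule continuous_on_compose2[OF contf]) (use a in \<open>auto intro!: continuous_intros simp: cbox_Pair_eq mem_Times_iff\<close>)
    then show "integral (cbox (u$2, u$3) (v$2, v$3)) (\<lambda>y. G (g3 (a, y))) = integral (cbox (u$2) (v$2)) (\<lambda>b. integral (cbox (u$3) (v$3)) (\<lambda>c. G (g3 (a, b, c))))"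
      by (rule integral_prod_continuous)
  qed
  finally show ?thesis by (simp add: g3_def)
qed



lemma key_ineq:
  fixes C0 F Fp a b y q A B :: real
  assumes "C0 > 0" "F > 0" "Fp \<ge> F" "a^2 \<le> C0 * b * F" "A - B = 2*q"
  shows "2*a*y*q \<le> b*y^2/2 + C0*(Fp*A^2 + F*B^2)"
proof -
  have b0: "b \<ge> 0"
  proof (rule ccontr)
    assume "\<not> b \<ge> 0"
    then have "C0 * F * b < 0" using assms by (simp add: mult_pos_neg)
    moreover have "a^2 \<ge> 0" by simp
    moreover have "a^2 \<le> C0 * F * b" using assms(4) by (simp add: mult.commute mult.left_commute)
    ultimately show False by linarith
  qed
  define X where "X = b*y^2/2"
  define Y where "Y = 2*C0*F*q^2"
  have X0: "X \<ge> 0" using b0 by (simp add: X_def)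
  have Y0: "Y \<ge> 0" using assms by (simp add: Y_def)
  have "(2*a*y*q)^2 = 4*a^2*y^2*q^2" by (simp add: power_mult_distrib)
  also have "\<dots> \<le> 4*(C0*b*F)*y^2*q^2" using assms(4) by (simp add: mult_right_mono)
  also have "\<dots> = 4*X*Y" by (simp add: X_def Y_def power2_eq_square)
  also have "\<dots> \<le> (X+Y)^2"
  proof -
    have "(X+Y)^2 - 4*X*Y = (X-Y)^2" by algebra
    then show ?thesis using zero_le_power2[of "X-Y"] by linarith
  qed
  finally have "(2*a*y*q)^2 \<le> (X+Y)^2" .
  then have 1: "2*a*y*q \<le> X + Y" by (rule power2_le_imp_le) (use X0 Y0 in linarith)
  have "A^2 + B^2 \<ge> 2*q^2"
  proof -
    have q: "q = (A-B)/2" using assms(5) by simp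
    have "A^2 + B^2 - 2*q^2 = (A+B)^2/2" unfolding q by (simp add: power2_eq_square field_simps)
    moreover have "(A+B)^2/2 \<ge> 0" by simp
    ultimately show ?thesis by linarith
  qed
  then have "C0 * (2*q^2) \<le> C0 * (A^2 + B^2)" using assms(1) by (simp add: mult_left_mono)
  then have "F * (C0 * (2*q^2)) \<le> F * (C0 * (A^2 + B^2))" using assms(2) by (simp add: mult_left_mono)
  then have "Y \<le> C0*(F*A^2 + F*B^2)" by (simp add: Y_def algebra_simps)
  also have "\<dots> \<le> C0*(Fp*A^2 + F*B^2)" using assms by (simp add: mult_left_mono mult_right_mono)
  finally show ?thesis using 1 X_def by linarith
qed


lemma f_mono_even:
  fixes f f' :: "real \<Rightarrow> real"
  assumes ev: "\<forall>v. f (-v) = f v" and d: "\<forall>v. (f has_real_derivative f' v) (at v)"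
    and pos: "\<forall>v\<ge>0. f' v \<ge> 0" and t: "t \<ge> 0" and r: "r \<ge> 0"
  shows "f (t - r) \<le> f (t + r)"
proof -
  have fa: "f (t - r) = f \<bar>t - r\<bar>" using ev by (cases "t - r \<ge> 0") (auto, metis minus_diff_eq)
  have "f \<bar>t - r\<bar> \<le> f (t + r)"
    by (rule DERIV_nonneg_imp_nondecreasing[where f=f]) (use t r d pos in auto)
  then show ?thesis using fa by simp
qed

lemma smooth_deriv:
  assumes "open U" "smooth_on U \<phi>" "p \<in> U"
  shows "(\<phi> has_derivative frechet_derivative \<phi> (at p)) (at p)"
proof -
  have "iter_dderiv [] \<phi> differentiable_on U" using assms(2) unfolding smooth_on_def by blast
  then have "\<phi> differentiable at p" using assms by (simp add: differentiable_on_eq_differentiable_at)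
  then show ?thesis by (simp add: frechet_derivative_works)
qed

lemma smooth_cont:
  assumes "smooth_on U \<phi>"
  shows "continuous_on U \<phi>"
proof -
  have "iter_dderiv [] \<phi> differentiable_on U" using assms unfolding smooth_on_def by blast
  then show ?thesis by (simp add: differentiable_imp_continuous_on)
qed

lemma smooth_cont_deriv:
  assumes "smooth_on U \<phi>"
  shows "continuous_on U (\<lambda>p. frechet_derivative \<phi> (at p) h)"
proof -
  have "iter_dderiv [h] \<phi> differentiable_on U" using assms unfolding smooth_on_def by blast
  then show ?thesis by (simp add: differentiable_imp_continuous_on)
qed

lemma lin_decomp:
  fixes D :: "real \<times> (real^3) \<Rightarrow> real"
  assumes "linear D"
  shows "D (a, w) = a * D (1,0) + w$1 * D (0, axis 1 1) + w$2 * D (0, axis 2 1) + w$3 * D (0, axis 3 1)"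
proof -
  have "(a, w) = a *\<^sub>R (1,0) + w$1 *\<^sub>R (0, axis 1 1) + w$2 *\<^sub>R (0, axis 2 1) + w$3 *\<^sub>R (0, axis 3 1)"
    by (auto intro!: vec3_eqI simp: axis_def)
  then have "D (a,w) = D (a *\<^sub>R (1,0) + w$1 *\<^sub>R (0, axis 1 1) + w$2 *\<^sub>R (0, axis 2 1) + w$3 *\<^sub>R (0, axis 3 1))"
    by simp
  also have "\<dots> = D (a *\<^sub>R (1,0)) + D (w$1 *\<^sub>R (0, axis 1 1)) + D (w$2 *\<^sub>R (0, axis 2 1)) + D (w$3 *\<^sub>R (0, axis 3 1))"
    by (simp only: linear_add[OF assms])
  also have "\<dots> = a * D (1,0) + w$1 * D (0, axis 1 1) + w$2 * D (0, axis 2 1) + w$3 * D (0, axis 3 1)"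
    by (simp only: linear_scale[OF assms] real_scaleR_def)
  finally show ?thesis .
qed

lemma Lop_formula:
  fixes \<phi> :: "real \<times> (real^3) \<Rightarrow> real"
  assumes d: "(\<phi> has_derivative D) (at (t,x))" and x: "x \<noteq> 0"
  shows "Lop (\<lambda>(s,y). norm y * \<phi> (s,y)) (t,x) = norm x * D (1, x /\<^sub>R norm x) + \<phi> (t,x)"
    "Lbar (\<lambda>(s,y). norm y * \<phi> (s,y)) (t,x) = norm x * D (1, - (x /\<^sub>R norm x)) - \<phi> (t,x)"
proof -
  have e: "(\<lambda>(s,y). norm y * \<phi> (s,y)) = (\<lambda>p. norm (snd p) * \<phi> p)" by auto
  have dn: "((\<lambda>p::real \<times> (real^3). norm (snd p)) has_derivative (\<lambda>h. snd h \<bullet> sgn x)) (at (t,x))"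
  proof -
    have "(snd has_derivative snd) (at (t,x))" by (rule bounded_linear_imp_has_derivative) (rule bounded_linear_snd)
    from has_derivative_compose[OF this, of norm "\<lambda>h. h \<bullet> sgn x"] has_derivative_norm[OF x]
    show ?thesis by simp
  qed
  have dd: "((\<lambda>p. norm (snd p) * \<phi> p) has_derivative (\<lambda>h. norm x * D h + (snd h \<bullet> sgn x) * \<phi> (t,x))) (at (t,x))"
    using has_derivative_mult[OF dn d] by simp
  have fd: "frechet_derivative (\<lambda>p. norm (snd p) * \<phi> p) (at (t,x)) = (\<lambda>h. norm x * D h + (snd h \<bullet> sgn x) * \<phi> (t,x))"
    using frechet_derivative_at[OF dd] by simp
  have s1: "(x /\<^sub>R norm x) \<bullet> sgn x = 1" using x by (simp add: sgn_div_norm inner_commute dot_square_norm power2_eq_square)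
  show "Lop (\<lambda>(s,y). norm y * \<phi> (s,y)) (t,x) = norm x * D (1, x /\<^sub>R norm x) + \<phi> (t,x)"
    unfolding Lop_def e fd using s1 by simp
  show "Lbar (\<lambda>(s,y). norm y * \<phi> (s,y)) (t,x) = norm x * D (1, - (x /\<^sub>R norm x)) - \<phi> (t,x)"
    unfolding Lbar_def e fd using s1 by simp
qed


lemma set_integrable_lborel_of:
  fixes F :: "real^3 \<Rightarrow> real"
  assumes "F absolutely_integrable_on A" "(\<lambda>x. indicator A x *\<^sub>R F x) \<in> borel_measurable borel"
  shows "set_integrable lborel A F"
proof -
  have "integrable lebesgue (\<lambda>x. indicator A x *\<^sub>R F x)" using assms(1) by (simp add: set_integrable_def)
  moreover have "(\<lambda>x. indicator A x *\<^sub>R F x) \<in> borel_measurable lborel" using assms(2) by simp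
  ultimately show ?thesis unfolding set_integrable_def using integrable_completion by blast
qed

lemma meas_punct:
  fixes F :: "real^3 \<Rightarrow> real"
  assumes "continuous_on (cball 0 R - {0}) F"
  shows "(\<lambda>x. indicator (cball 0 R) x *\<^sub>R F x) \<in> borel_measurable borel"
proof -
  have m1: "(\<lambda>x. indicator (cball 0 R - {0}) x *\<^sub>R F x) \<in> borel_measurable borel"
    by (rule borel_measurable_continuous_on_indicator[OF _ assms]) auto
  have m3: "(\<lambda>x. indicator ({0} \<inter> cball 0 R) x *\<^sub>R F 0) \<in> borel_measurable borel"
    by (intro borel_measurable_scaleR borel_measurable_indicator borel_measurable_const) auto
  have eq: "(\<lambda>x. indicator (cball 0 R) x *\<^sub>R F x) = (\<lambda>x. indicator (cball 0 R - {0}) x *\<^sub>R F x + indicator ({0} \<inter> cball 0 R) x *\<^sub>R F 0)"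
    by (auto simp: indicator_def fun_eq_iff)
  show ?thesis unfolding eq by (rule borel_measurable_add[OF m1 m3])
qed

lemma cont_P3: "continuous_on X P3"
  by (rule continuous_at_imp_continuous_on) (use has_derivative_continuous[OF P3_deriv] in blast)

lemma sphere_int_eq:
  fixes h :: "real \<Rightarrow> real \<Rightarrow> real"
  assumes c: "continuous_on UNIV (\<lambda>(a,b). h a b)"
  shows "(LBINT a=0..pi. (LBINT b=0..2*pi. h a b)) = integral {0..pi} (\<lambda>a. integral {0..2*pi} (\<lambda>b. h a b))"
proof -
  have ch: "continuous_on X (h a)" for a X
  proof -
    have "continuous_on X (\<lambda>b. (\<lambda>(a,b). h a b) (a,b))"
      by (rule continuous_on_compose2[OF c]) (auto intro!: continuous_intros)
    then show ?thesis by simp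
  qed
  have inner: "(LBINT b=0..2*pi. h a b) = integral {0..2*pi} (h a)" for a
  proof -
    have "set_integrable lborel {0..2*pi} (h a)" by (rule borel_integrable_atLeastAtMost') (rule ch)
    then show ?thesis using interval_integral_eq_integral[of 0 "2*pi" "h a"] by (simp add: zero_ereal_def)
  qed
  have co: "continuous_on {0..pi} (\<lambda>a. integral (cbox 0 (2*pi)) (h a))"
    by (rule integral_continuous_on_param) (rule continuous_on_subset[OF c], auto)
  have "set_integrable lborel {0..pi} (\<lambda>a. integral (cbox 0 (2*pi)) (h a))"
    by (rule borel_integrable_atLeastAtMost') (rule co)
  then show ?thesis unfolding inner
    using interval_integral_eq_integral[of 0 pi "\<lambda>a. integral {0..2*pi} (h a)"] by (simp add: zero_ereal_def)
qed



lemma inner_ftc: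
  fixes \<phi> :: "real \<times> (real^3) \<Rightarrow> real" and w :: "real^3"
  assumes hasD: "\<And>p. p \<in> U \<Longrightarrow> (\<phi> has_derivative D p) (at p)"
    and df': "\<forall>v. (f' has_real_derivative f'' v) (at v)"
    and inU: "\<And>c. c \<in> {0..R} \<Longrightarrow> (t, c *\<^sub>R w) \<in> U" and R: "R \<ge> 0"
  shows "((\<lambda>c. s * (f'' (t - c) * (c * \<phi> (t, c *\<^sub>R w))^2 - 2 * f' (t - c) * (c * \<phi> (t, c *\<^sub>R w)) * (\<phi> (t, c *\<^sub>R w) + c * D (t, c *\<^sub>R w) (0, w))))
     has_integral (s * (- f' (t - R) * R^2 * (\<phi> (t, R *\<^sub>R w))^2))) {0..R}"
proof -
  define Kf where "Kf c = s * (- f' (t - c) * c^2 * (\<phi> (t, c *\<^sub>R w))^2)" for c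
  have deriv: "(Kf has_vector_derivative (s * (f'' (t - c) * (c * \<phi> (t, c *\<^sub>R w))^2 - 2 * f' (t - c) * (c * \<phi> (t, c *\<^sub>R w)) * (\<phi> (t, c *\<^sub>R w) + c * D (t, c *\<^sub>R w) (0, w))))) (at c within {0..R})"
    if c: "c \<in> {0..R}" for c
  proof -
    let ?p = "(t, c *\<^sub>R w)"
    have pU: "?p \<in> U" using inU[OF c] .
    have dp: "((\<lambda>c. (t, c *\<^sub>R w)) has_derivative (\<lambda>h. (0, h *\<^sub>R w))) (at c within {0..R})"
      by (auto intro!: derivative_eq_intros)
    have lin: "linear (D ?p)" using has_derivative_linear[OF hasD[OF pU]] .
    have dphi0: "((\<lambda>c. \<phi> (t, c *\<^sub>R w)) has_derivative (\<lambda>h. D ?p (0, h *\<^sub>R w))) (at c within {0..R})"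
      using has_derivative_compose[OF dp hasD[OF pU]] by simp
    have "(\<lambda>h. D ?p (0, h *\<^sub>R w)) = (\<lambda>h. D ?p (0, w) * h)"
    proof
      fix h :: real
      have "(0::real, h *\<^sub>R w) = h *\<^sub>R (0, w)" by simp
      then show "D ?p (0, h *\<^sub>R w) = D ?p (0, w) * h" using linear_scale[OF lin, of h "(0,w)"] by simp
    qed
    then have dphi: "((\<lambda>c. \<phi> (t, c *\<^sub>R w)) has_real_derivative D ?p (0, w)) (at c within {0..R})"
      using dphi0 by (simp add: has_field_derivative_def)
    have dt: "((\<lambda>c. t - c) has_real_derivative -1) (at c within {0..R})"
      by (auto intro!: derivative_eq_intros)
    have df'c: "((\<lambda>c. f' (t - c)) has_real_derivative f'' (t - c) * -1) (at c within {0..R})"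
      by (rule DERIV_chain2[OF df'[rule_format] dt])
    have "(Kf has_real_derivative (s * (f'' (t - c) * (c * \<phi> ?p)^2 - 2 * f' (t - c) * (c * \<phi> ?p) * (\<phi> ?p + c * D ?p (0, w))))) (at c within {0..R})"
      unfolding Kf_def
      by (rule derivative_eq_intros df'c dphi refl | simp)+ (simp add: algebra_simps power2_eq_square)
    then show ?thesis by (simp add: has_real_derivative_iff_has_vector_derivative)
  qed
  have "((\<lambda>c. s * (f'' (t - c) * (c * \<phi> (t, c *\<^sub>R w))^2 - 2 * f' (t - c) * (c * \<phi> (t, c *\<^sub>R w)) * (\<phi> (t, c *\<^sub>R w) + c * D (t, c *\<^sub>R w) (0, w)))) has_integral (Kf R - Kf 0)) {0..R}"
    by (rule fundamental_theorem_of_calculus[OF R deriv]) simp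
  then show ?thesis by (simp add: Kf_def)
qed


lemma sph_chi: "sph a b = (\<chi> i. if i = 1 then sin a * cos b else if i = 2 then sin a * sin b else cos a)"
  by (intro vec3_eqI) simp_all

lemma cont_sph:
  fixes a b :: "'a::t2_space \<Rightarrow> real"
  assumes ca: "continuous_on X a" and cb: "continuous_on X b"
  shows "continuous_on X (\<lambda>x. sph (a x) (b x))"
proof -
  have s1: "continuous_on X (\<lambda>x. sin (a x))" using ca by (intro continuous_intros)
  have s2: "continuous_on X (\<lambda>x. cos (a x))" using ca by (intro continuous_intros)
  have s3: "continuous_on X (\<lambda>x. sin (b x))" using cb by (intro continuous_intros)
  have s4: "continuous_on X (\<lambda>x. cos (b x))" using cb by (intro continuous_intros)
  have "continuous_on X (\<lambda>x. if i = 1 then sin (a x) * cos (b x) else if i = 2 then sin (a x) * sin (b x) else cos (a x))" for i :: 3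
    by (cases "i = 1"; cases "i = 2") (auto intro!: continuous_on_mult s1 s2 s3 s4)
  then show ?thesis unfolding sph_chi by (intro continuous_on_vec_lambda)
qed

lemma integral_nonneg':
  fixes g :: "'a::euclidean_space \<Rightarrow> real"
  assumes "\<And>x. x \<in> S \<Longrightarrow> 0 \<le> g x"
  shows "0 \<le> integral S g"
proof (cases "g integrable_on S")
  case True then show ?thesis using assms by (rule integral_nonneg)
next
  case False then show ?thesis by (simp add: not_integrable_integral)
qed

lemma box3_lebesgue: "box boxa (boxb R) \<in> sets lebesgue" by simp


lemma main_ineq:
  fixes C0 t R :: real and f f' f'' :: "real \<Rightarrow> real" and \<phi> :: "real \<times> (real^3) \<Rightarrow> real" and U
  assumes C0: "C0 > 0"
    and fpos: "\<forall>v. f v > 0" and fev: "\<forall>v. f (-v) = f v"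
    and df: "\<forall>v. (f has_real_derivative f' v) (at v)"
    and df': "\<forall>v. (f' has_real_derivative f'' v) (at v)" and cf'': "continuous_on UNIV f''"
    and f'pos: "\<forall>v\<ge>0. f' v \<ge> 0" and fineq: "\<forall>v. (f' v)\<^sup>2 \<le> C0 * f'' v * f v"
    and t: "t \<ge> 0" and R: "R > 0" and Uo: "open U" and UR: "{t} \<times> cball 0 R \<subseteq> U" and sm: "smooth_on U \<phi>"
  shows "(LINT x:cball 0 R|lborel. f'' (t - norm x) * (\<phi> (t, x))\<^sup>2)
       \<le> (2 + 2*C0) * ((LINT x:cball 0 R|lborel.
                 (f (t + norm x) * (Lop (\<lambda>(s,y). norm y * \<phi> (s,y)) (t, x))\<^sup>2
                  + f (t - norm x) * (Lbar (\<lambda>(s,y). norm y * \<phi> (s,y)) (t, x))\<^sup>2)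
                 / (norm x)\<^sup>2)
              + \<bar>f' (t - R)\<bar> * sphere_integral (\<lambda>\<omega>. (\<phi> (t, R *\<^sub>R \<omega>))\<^sup>2 * R\<^sup>2))"
proof -
  define D where "D p = frechet_derivative \<phi> (at p)" for p
  define DD where "DD p a (w::real^3) = a * D p (1,0) + w$1 * D p (0, axis 1 1) + w$2 * D p (0, axis 2 1) + w$3 * D p (0, axis 3 1)" for p a w
  have hasD: "(\<phi> has_derivative D p) (at p)" if "p \<in> U" for p
    using smooth_deriv[OF Uo sm that] by (simp add: D_def)
  have DDeq: "D p (a,w) = DD p a w" if "p \<in> U" for p a w
    unfolding DD_def by (rule lin_decomp[OF has_derivative_linear[OF hasD[OF that]]])
  have cphi: "continuous_on U \<phi>" by (rule smooth_cont[OF sm])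
  have cD: "continuous_on U (\<lambda>p. D p h)" for h using smooth_cont_deriv[OF sm] by (simp add: D_def)
  have cDD: "continuous_on X (\<lambda>v. DD (q v) (a v) (w v))"
    if "continuous_on X q" "q ` X \<subseteq> U" "continuous_on X a" "continuous_on X w" for X q a w
  proof -
    have c: "continuous_on X (\<lambda>v. D (q v) h)" for h by (rule continuous_on_compose2[OF cD that(1,2)])
    show ?thesis unfolding DD_def by (intro continuous_intros c that)
  qed
  have cf: "continuous_on X f" for X using df by (intro continuous_at_imp_continuous_on) (auto intro: DERIV_isCont)
  have cf': "continuous_on X f'" for X using df' by (intro continuous_at_imp_continuous_on) (auto intro: DERIV_isCont)
  have cf''X: "continuous_on X f''" for X using cf'' continuous_on_subset by blast
  define K where "K = cbox boxa (boxb R)"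
  define S where "S = box boxa (boxb R)"
  have SK: "S \<subseteq> K" by (simp add: S_def K_def box_subset_cbox)
  define Q where "Q v = (t, P3 v)" for v
  have QK: "Q v \<in> U" if "v \<in> K" for v
  proof -
    have "norm (P3 v) \<le> R" using that by (simp add: K_def mem_cbox3 norm_P3)
    then show ?thesis using UR by (auto simp: Q_def)
  qed
  have QKs: "Q ` K \<subseteq> U" using QK by blast
  have cQ: "continuous_on X Q" for X unfolding Q_def by (intro continuous_intros cont_P3)
  define \<omega> where "\<omega> v = sph (v$1) (v$2)" for v :: "real^3"
  have c\<omega>: "continuous_on X \<omega>" for X unfolding \<omega>_def by (intro cont_sph continuous_intros)
  have P3\<omega>: "P3 v = v$3 *\<^sub>R \<omega> v" for v by (simp add: P3_def \<omega>_def)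
  define phv where "phv v = \<phi> (Q v)" for v
  define A where "A v = phv v + v$3 * DD (Q v) 1 (\<omega> v)" for v
  define B where "B v = - phv v + v$3 * DD (Q v) 1 (- \<omega> v)" for v
  define dr where "dr v = DD (Q v) 0 (\<omega> v)" for v
  define GL where "GL v = (v$3)^2 * sin (v$1) * (f'' (t - v$3) * (phv v)^2)" for v
  define GR where "GR v = sin (v$1) * (f (t + v$3) * (A v)^2 + f (t - v$3) * (B v)^2)" for v
  define Kd where "Kd v = sin (v$1) * (f'' (t - v$3) * (v$3 * phv v)^2 - 2 * f' (t - v$3) * (v$3 * phv v) * (phv v + v$3 * dr v))" for v
  define FL where "FL x = f'' (t - norm x) * (\<phi> (t, x))^2" for x
  define FR where "FR x = (f (t + norm x) * (Lop (\<lambda>(s,y). norm y * \<phi> (s,y)) (t, x))\<^sup>2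
                  + f (t - norm x) * (Lbar (\<lambda>(s,y). norm y * \<phi> (s,y)) (t, x))\<^sup>2) / (norm x)\<^sup>2" for x
  have cphv: "continuous_on K phv" unfolding phv_def by (rule continuous_on_compose2[OF cphi cQ QKs])
  have cA: "continuous_on K A" unfolding A_def
    by (intro continuous_intros cphv cDD cQ QKs c\<omega>)
  have cB: "continuous_on K B" unfolding B_def
    by (intro continuous_intros cphv cDD cQ QKs c\<omega>)
  have cdr: "continuous_on K dr" unfolding dr_def
    by (intro continuous_intros cDD cQ QKs c\<omega>)
  have cGL: "continuous_on K GL" unfolding GL_def
    by (intro continuous_intros cphv continuous_on_compose2[OF cf''X[of UNIV]]) auto
  have cGR: "continuous_on K GR" unfolding GR_def
    by (intro continuous_intros cA cB continuous_on_compose2[OF cf[of UNIV]]) auto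
  have cKd: "continuous_on K Kd" unfolding Kd_def
    by (intro continuous_intros cphv cdr continuous_on_compose2[OF cf''X[of UNIV]] continuous_on_compose2[OF cf'[of UNIV]]) auto
  have memS: "0 < v$1 \<and> v$1 < pi \<and> 0 < v$2 \<and> v$2 < 2*pi \<and> 0 < v$3 \<and> v$3 < R" if "v \<in> S" for v
    using that by (simp add: S_def mem_box3)
  have memK: "0 \<le> v$1 \<and> v$1 \<le> pi \<and> 0 \<le> v$2 \<and> v$2 \<le> 2*pi \<and> 0 \<le> v$3 \<and> v$3 \<le> R" if "v \<in> K" for v
    using that by (simp add: K_def mem_cbox3)
  have F1: "(v$3)^2 * sin (v$1) * FL (P3 v) = GL v" if "v \<in> S" for v
    using memS[OF that] by (simp add: FL_def GL_def phv_def Q_def norm_P3)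
  have F2: "(v$3)^2 * sin (v$1) * FR (P3 v) = GR v" if v: "v \<in> S" for v
  proof -
    have vK: "v \<in> K" using v SK by blast
    have r: "v$3 > 0" using memS[OF v] by simp
    have nP: "norm (P3 v) = v$3" using r by (simp add: norm_P3)
    have x0: "P3 v \<noteq> 0" using nP r by auto
    have n\<omega>: "norm (\<omega> v) = 1" by (simp add: \<omega>_def)
    have dir: "P3 v /\<^sub>R norm (P3 v) = \<omega> v" using r by (simp add: nP P3\<omega> n\<omega>)
    have hD: "(\<phi> has_derivative D (Q v)) (at (t, P3 v))" using hasD[OF QK[OF vK]] by (simp add: Q_def)
    note LF = Lop_formula[OF hD x0]
    have L1: "Lop (\<lambda>(s,y). norm y * \<phi> (s,y)) (t, P3 v) = A v"
    proof -
      have "Lop (\<lambda>(s,y). norm y * \<phi> (s,y)) (t, P3 v) = norm (P3 v) * D (Q v) (1, P3 v /\<^sub>R norm (P3 v)) + \<phi> (t, P3 v)"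
        using LF(1) by (simp only: Q_def)
      also have "\<dots> = norm (P3 v) * D (Q v) (1, \<omega> v) + \<phi> (t, P3 v)" by (simp only: dir)
      also have "\<dots> = A v" using DDeq[OF QK[OF vK]] by (simp add: nP A_def phv_def Q_def)
      finally show ?thesis .
    qed
    have L2: "Lbar (\<lambda>(s,y). norm y * \<phi> (s,y)) (t, P3 v) = B v"
    proof -
      have "Lbar (\<lambda>(s,y). norm y * \<phi> (s,y)) (t, P3 v) = norm (P3 v) * D (Q v) (1, - (P3 v /\<^sub>R norm (P3 v))) - \<phi> (t, P3 v)"
        using LF(2) by (simp only: Q_def)
      also have "\<dots> = norm (P3 v) * D (Q v) (1, - \<omega> v) - \<phi> (t, P3 v)" by (simp only: dir)
      also have "\<dots> = B v" using DDeq[OF QK[OF vK]] by (simp add: nP B_def phv_def Q_def)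
      finally show ?thesis .
    qed
    show ?thesis using r by (simp add: FR_def GR_def L1 L2 nP)
  qed
  have F3: "GL v / 2 \<le> Kd v + C0 * GR v" if v: "v \<in> K" for v
  proof -
    define s where "s = sin (v$1)"
    have s0: "s \<ge> 0" using memK[OF v] by (simp add: s_def sin_ge_zero)
    have AB: "A v - B v = 2 * (phv v + v$3 * dr v)"
      by (simp add: A_def B_def dr_def DD_def algebra_simps)
    have mono: "f (t - v$3) \<le> f (t + v$3)"
      using f_mono_even[OF fev df f'pos t] memK[OF v] by simp
    have ki: "2 * f' (t - v$3) * (v$3 * phv v) * (phv v + v$3 * dr v)
        \<le> f'' (t - v$3) * (v$3 * phv v)^2 / 2 + C0 * (f (t + v$3) * (A v)^2 + f (t - v$3) * (B v)^2)"
      by (rule key_ineq[OF C0 fpos[rule_format] mono fineq[rule_format] AB])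
    have "s * (2 * f' (t - v$3) * (v$3 * phv v) * (phv v + v$3 * dr v))
        \<le> s * (f'' (t - v$3) * (v$3 * phv v)^2 / 2 + C0 * (f (t + v$3) * (A v)^2 + f (t - v$3) * (B v)^2))"
      using ki s0 by (rule mult_left_mono)
    then show ?thesis unfolding GL_def Kd_def GR_def s_def[symmetric]
      by (simp add: algebra_simps power_mult_distrib)
  qed
  have lebS: "S \<in> sets lebesgue" by (simp add: S_def)
  have aiS: "g absolutely_integrable_on S" if "continuous_on K g" for g :: "real^3 \<Rightarrow> real"
  proof -
    have "g absolutely_integrable_on K" using absolutely_integrable_continuous that by (simp add: K_def)
    then show ?thesis using set_integrable_subset lebS SK by blast
  qed
  have intS: "g integrable_on S" if "continuous_on K g" for g :: "real^3 \<Rightarrow> real"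
    using set_lebesgue_integral_eq_integral(1)[OF aiS[OF that]] .
  have h1: "(\<lambda>v. (v$3)^2 * sin (v$1) * FL (P3 v)) absolutely_integrable_on box boxa (boxb R)"
    using absolutely_integrable_spike[OF aiS[OF cGL] negligible_empty, of "\<lambda>v. (v$3)^2 * sin (v$1) * FL (P3 v)"] F1
    by (simp add: S_def)
  note PL = polar_integral[OF h1]
  have ctx: "continuous_on X (\<lambda>x::real^3. (t, x))" for X by (intro continuous_intros)
  have ctxU: "(\<lambda>x::real^3. (t, x)) ` cball 0 R \<subseteq> U" using UR by auto
  have contFL: "continuous_on (cball 0 R) FL" unfolding FL_def
    by (intro continuous_intros continuous_on_compose2[OF cf''X[of UNIV]] continuous_on_compose2[OF cphi ctx ctxU]) auto
  have siL: "set_integrable lborel (cball 0 R) FL"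
    by (rule set_integrable_lborel_of[OF PL(1) meas_punct]) (rule continuous_on_subset[OF contFL], auto)
  have LHS: "(LINT x:cball 0 R|lborel. FL x) = integral S GL"
  proof -
    have "(LINT x:cball 0 R|lborel. FL x) = integral (cball 0 R) FL" by (rule set_borel_integral_eq_integral(2)[OF siL])
    also have "\<dots> = integral S (\<lambda>v. (v$3)^2 * sin (v$1) * FL (P3 v))" using PL(2) by (simp add: S_def)
    also have "\<dots> = integral S GL" by (rule integral_cong) (use F1 in auto)
    finally show ?thesis .
  qed
  have h2: "(\<lambda>v. (v$3)^2 * sin (v$1) * FR (P3 v)) absolutely_integrable_on box boxa (boxb R)"
    using absolutely_integrable_spike[OF aiS[OF cGR] negligible_empty, of "\<lambda>v. (v$3)^2 * sin (v$1) * FR (P3 v)"] F2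
    by (simp add: S_def)
  note PR = polar_integral[OF h2]
  define FR' where "FR' x = (f (t + norm x) * (norm x * DD (t,x) 1 (x /\<^sub>R norm x) + \<phi> (t,x))\<^sup>2
                  + f (t - norm x) * (norm x * DD (t,x) 1 (- (x /\<^sub>R norm x)) - \<phi> (t,x))\<^sup>2) / (norm x)\<^sup>2" for x
  have ctxU': "(\<lambda>x::real^3. (t, x)) ` (cball 0 R - {0}) \<subseteq> U" using UR by auto
  have cdir: "continuous_on (cball 0 R - {0}) (\<lambda>x::real^3. x /\<^sub>R norm x)"
    by (intro continuous_intros) auto
  have contFR': "continuous_on (cball 0 R - {0}) FR'" unfolding FR'_def
    by (intro continuous_intros continuous_on_compose2[OF cf[of UNIV]] continuous_on_compose2[OF cphi ctx ctxU']
        cDD[OF ctx ctxU'] cdir) auto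
  have contFR: "continuous_on (cball 0 R - {0}) FR"
  proof (rule continuous_on_eq[OF contFR'])
    fix x :: "real^3" assume x: "x \<in> cball 0 R - {0}"
    then have xU: "(t,x) \<in> U" using UR by auto
    have x0: "x \<noteq> 0" using x by simp
    note LF = Lop_formula[OF hasD[OF xU] x0]
    show "FR' x = FR x" unfolding FR_def FR'_def LF using DDeq[OF xU] by simp
  qed
  have siR: "set_integrable lborel (cball 0 R) FR"
    by (rule set_integrable_lborel_of[OF PR(1) meas_punct[OF contFR]])
  have RHS: "(LINT x:cball 0 R|lborel. FR x) = integral S GR"
  proof -
    have "(LINT x:cball 0 R|lborel. FR x) = integral (cball 0 R) FR" by (rule set_borel_integral_eq_integral(2)[OF siR])
    also have "\<dots> = integral S (\<lambda>v. (v$3)^2 * sin (v$1) * FR (P3 v))" using PR(2) by (simp add: S_def)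
    also have "\<dots> = integral S GR" by (rule integral_cong) (use F2 in auto)
    finally show ?thesis .
  qed
  define X where "X = integral {0..pi} (\<lambda>a. integral {0..2*pi} (\<lambda>b. (\<phi> (t, R *\<^sub>R sph a b))\<^sup>2 * R\<^sup>2 * sin a))"
  have inner: "integral {0..R} (\<lambda>c. Kd (vector [a,b,c])) = - f' (t - R) * ((\<phi> (t, R *\<^sub>R sph a b))\<^sup>2 * R\<^sup>2 * sin a)" for a b
  proof -
    have inU: "(t, c *\<^sub>R sph a b) \<in> U" if "c \<in> {0..R}" for c
      using that UR by auto
    have "integral {0..R} (\<lambda>c. Kd (vector [a,b,c])) = integral {0..R} (\<lambda>c. sin a * (f'' (t - c) * (c * \<phi> (t, c *\<^sub>R sph a b))^2 - 2 * f' (t - c) * (c * \<phi> (t, c *\<^sub>R sph a b)) * (\<phi> (t, c *\<^sub>R sph a b) + c * D (t, c *\<^sub>R sph a b) (0, sph a b))))"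
    proof (rule integral_cong)
      fix c assume c: "c \<in> {0..R}"
      show "Kd (vector [a,b,c]) = sin a * (f'' (t - c) * (c * \<phi> (t, c *\<^sub>R sph a b))^2 - 2 * f' (t - c) * (c * \<phi> (t, c *\<^sub>R sph a b)) * (\<phi> (t, c *\<^sub>R sph a b) + c * D (t, c *\<^sub>R sph a b) (0, sph a b)))"
        using DDeq[OF inU[OF c]] by (simp add: Kd_def phv_def dr_def Q_def P3_def \<omega>_def)
    qed
    also have "\<dots> = sin a * (- f' (t - R) * R^2 * (\<phi> (t, R *\<^sub>R sph a b))^2)"
      by (rule integral_unique[OF inner_ftc[OF hasD df' inU]]) (use R in auto)
    finally show ?thesis by (simp add: algebra_simps)
  qed
  have KdInt: "integral S Kd = - f' (t - R) * X"
  proof -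
    have "integral S Kd = integral K Kd" by (simp add: S_def K_def integral_open_interval)
    also have "\<dots> = integral {0..pi} (\<lambda>a. integral {0..2*pi} (\<lambda>b. integral {0..R} (\<lambda>c. Kd (vector [a,b,c]))))"
      using fubini3[OF cKd[unfolded K_def]] by (simp add: K_def boxa_def boxb_def)
    also have "\<dots> = - f' (t - R) * X" by (simp add: inner X_def)
    finally show ?thesis .
  qed
  have sphX: "sphere_integral (\<lambda>\<omega>. (\<phi> (t, R *\<^sub>R \<omega>))\<^sup>2 * R\<^sup>2) = X"
  proof -
    have cs: "continuous_on UNIV (\<lambda>(a,b). (\<phi> (t, R *\<^sub>R sph a b))\<^sup>2 * R\<^sup>2 * sin a)"
    proof -
      have c1: "continuous_on UNIV (\<lambda>p::real\<times>real. (t, R *\<^sub>R sph (fst p) (snd p)))"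
        by (intro continuous_intros cont_sph)
      have c2: "(\<lambda>p::real\<times>real. (t, R *\<^sub>R sph (fst p) (snd p))) ` UNIV \<subseteq> U" using UR R by auto
      have "continuous_on UNIV (\<lambda>p::real\<times>real. (\<phi> (t, R *\<^sub>R sph (fst p) (snd p)))\<^sup>2 * R\<^sup>2 * sin (fst p))"
        by (intro continuous_intros continuous_on_compose2[OF cphi c1 c2])
      then show ?thesis by (simp add: case_prod_beta)
    qed
    show ?thesis unfolding sphere_integral_def X_def using sphere_int_eq[OF cs] by simp
  qed
  have X0: "X \<ge> 0" unfolding X_def
    by (intro integral_nonneg' mult_nonneg_nonneg) (auto intro: sin_ge_zero)
  have QR0: "integral S GR \<ge> 0"
  proof (rule integral_nonneg')
    fix v assume "v \<in> S"
    then have m: "0 < v$1 \<and> v$1 < pi" using memS by blast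
    then have "sin (v$1) \<ge> 0" by (intro sin_ge_zero) auto
    then show "0 \<le> GR v" unfolding GR_def using fpos
      by (intro mult_nonneg_nonneg add_nonneg_nonneg) (auto intro: less_imp_le)
  qed
  have "integral S GL / 2 = integral S (\<lambda>v. GL v / 2)" by simp
  also have "\<dots> \<le> integral S (\<lambda>v. Kd v + C0 * GR v)"
  proof (rule integral_le)
    show "(\<lambda>v. GL v / 2) integrable_on S" by (rule intS) (intro continuous_intros cGL, simp)
    show "(\<lambda>v. Kd v + C0 * GR v) integrable_on S" by (rule intS) (intro continuous_intros cKd cGR)
    show "GL v / 2 \<le> Kd v + C0 * GR v" if "v \<in> S" for v using F3 SK that by blast
  qed
  also have "\<dots> = integral S Kd + C0 * integral S GR"
    using integral_add[OF intS[OF cKd] integrable_on_cmult_left[OF intS[OF cGR]]] by simp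
  finally have main: "integral S GL \<le> 2 * (- f' (t - R) * X) + 2 * C0 * integral S GR"
    using KdInt by simp
  have e1: "- f' (t - R) * X \<le> \<bar>f' (t - R)\<bar> * X" using X0 by (intro mult_right_mono) auto
  have e2: "0 \<le> \<bar>f' (t - R)\<bar> * X" using X0 by simp
  have e3: "0 \<le> C0 * (\<bar>f' (t - R)\<bar> * X)" using e2 C0 by simp
  have e4: "0 \<le> C0 * integral S GR" using QR0 C0 by simp
  have fin: "integral S GL \<le> (2 + 2*C0) * (integral S GR + \<bar>f' (t - R)\<bar> * X)"
  proof -
    define QR where "QR = integral S GR"
    define Y where "Y = \<bar>f' (t - R)\<bar> * X"
    define Z where "Z = - f' (t - R) * X"
    have m: "integral S GL \<le> 2 * Z + 2 * (C0 * QR)" using main by (simp add: Z_def QR_def mult.assoc)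
    have ex: "(2 + 2*C0) * (QR + Y) = 2*QR + 2*(C0*QR) + 2*Y + 2*(C0*Y)" by (simp add: algebra_simps)
    have "Z \<le> Y" "0 \<le> Y" "0 \<le> C0 * Y" "0 \<le> C0 * QR" "0 \<le> QR"
      using e1 e2 e3 e4 QR0 by (simp_all add: Z_def Y_def QR_def)
    then have "integral S GL \<le> (2 + 2*C0) * (QR + Y)" using m ex by linarith
    then show ?thesis by (simp add: QR_def Y_def)
  qed
  have eqL: "(LINT x:cball 0 R|lborel. f'' (t - norm x) * (\<phi> (t, x))\<^sup>2) = (LINT x:cball 0 R|lborel. FL x)"
    by (simp add: FL_def)
  have eqR: "(LINT x:cball 0 R|lborel.
                 (f (t + norm x) * (Lop (\<lambda>(s,y). norm y * \<phi> (s,y)) (t, x))\<^sup>2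
                  + f (t - norm x) * (Lbar (\<lambda>(s,y). norm y * \<phi> (s,y)) (t, x))\<^sup>2)
                 / (norm x)\<^sup>2) = (LINT x:cball 0 R|lborel. FR x)"
    by (simp add: FR_def)
  show ?thesis unfolding eqL eqR LHS RHS sphX using fin .
qed


theorem lemma2p9:
  fixes C0 :: real
  assumes "C0 > 0"
  shows "\<exists>C>0. \<forall>(f::real\<Rightarrow>real) f' f'' (t::real) (R::real) (\<phi>::real \<times> (real^3) \<Rightarrow> real).
     (\<forall>v. f v > 0) \<and> (\<forall>v. f (-v) = f v) \<and>
     (\<forall>v. (f has_real_derivative f' v) (at v)) \<and>
     (\<forall>v. (f' has_real_derivative f'' v) (at v)) \<and> continuous_on UNIV f'' \<and>
     (\<forall>v\<ge>0. f' v \<ge> 0) \<and>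
     (\<forall>v. (f' v)\<^sup>2 \<le> C0 * f'' v * f v) \<and>
     t \<ge> 0 \<and> R > 0 \<and>
     (\<exists>U. open U \<and> {t} \<times> cball 0 R \<subseteq> U \<and> smooth_on U \<phi>)
     \<longrightarrow>
     (LINT x:cball 0 R|lborel. f'' (t - norm x) * (\<phi> (t, x))\<^sup>2)
       \<le> C * ((LINT x:cball 0 R|lborel.
                 (f (t + norm x) * (Lop (\<lambda>(s,y). norm y * \<phi> (s,y)) (t, x))\<^sup>2
                  + f (t - norm x) * (Lbar (\<lambda>(s,y). norm y * \<phi> (s,y)) (t, x))\<^sup>2)
                 / (norm x)\<^sup>2)
              + \<bar>f' (t - R)\<bar> * sphere_integral (\<lambda>\<omega>. (\<phi> (t, R *\<^sub>R \<omega>))\<^sup>2 * R\<^sup>2))"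
  proof (rule exI[where x="2 + 2*C0"], intro conjI allI impI)
  show "2 + 2*C0 > (0::real)" using assms by simp
next
  fix f f' f'' :: "real \<Rightarrow> real" and t R :: real and \<phi> :: "real \<times> (real^3) \<Rightarrow> real"
  assume H: "(\<forall>v. f v > 0) \<and> (\<forall>v. f (-v) = f v) \<and>
     (\<forall>v. (f has_real_derivative f' v) (at v)) \<and>
     (\<forall>v. (f' has_real_derivative f'' v) (at v)) \<and> continuous_on UNIV f'' \<and>
     (\<forall>v\<ge>0. f' v \<ge> 0) \<and>
     (\<forall>v. (f' v)\<^sup>2 \<le> C0 * f'' v * f v) \<and>
     t \<ge> 0 \<and> R > 0 \<and>
     (\<exists>U. open U \<and> {t} \<times> cball 0 R \<subseteq> U \<and> smooth_on U \<phi>)"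
  then obtain U where U: "open U" "{t} \<times> cball 0 R \<subseteq> U" "smooth_on U \<phi>" by blast
  show "(LINT x:cball 0 R|lborel. f'' (t - norm x) * (\<phi> (t, x))\<^sup>2)
       \<le> (2 + 2*C0) * ((LINT x:cball 0 R|lborel.
                 (f (t + norm x) * (Lop (\<lambda>(s,y). norm y * \<phi> (s,y)) (t, x))\<^sup>2
                  + f (t - norm x) * (Lbar (\<lambda>(s,y). norm y * \<phi> (s,y)) (t, x))\<^sup>2)
                 / (norm x)\<^sup>2)
              + \<bar>f' (t - R)\<bar> * sphere_integral (\<lambda>\<omega>. (\<phi> (t, R *\<^sub>R \<omega>))\<^sup>2 * R\<^sup>2))"
    using H U by (intro main_ineq[OF assms]) auto
qed

end
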